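(* Let $\gamma_a,\gamma_s>0$, $\lambda\ge0$, $q>0$, $\sigma_B>0$, $\varepsilon_a\in(0,2)$, and let $\beta_a,\beta_s:\mathbb R\to\mathbb R$ be globally Lipschitz continuous with $\beta_a\ge0$, $\beta_s>0$. Define \[ f_1(T_a,T_s)=\tfrac{1}{\gamma_a}\big[-\lambda(T_a-T_s)+\varepsilon_a\sigma_B|T_s|^3T_s-2\varepsilon_a\sigma_B|T_a|^3T_a+q\beta_a(T_a)\big], \] \[ f_2(T_a,T_s)=\tfrac{1}{\gamma_s}\big[-\lambda(T_s-T_a)-\sigma_B|T_s|^3T_s+\varepsilon_a\sigma_B|T_a|^3T_a+q\beta_s(T_s)\big], \] and, with $\overline{\mathcal Q}=[0,+\infty)^2$, let $P_+=\{(T_a,T_s)\in\overline{\mathcal Q}: f_1(T_a,T_s)\ge0,\ f_2(T_a,T_s)\ge0\}$ and $P_-=\{(T_a,T_s)\in\overline{\mathcal Q}: f_1(T_a,T_s)\le0,\ f_2(T_a,T_s)\le0\}$. Let $(T_a,T_s)$ be the solution of $T_a'=f_1(T_a,T_s)$, $T_s'=f_2(T_a,T_s)$, $(T_a,T_s)(0)=(T_a^{(0)},T_s^{(0)})$. If $(T_a^{(0)},T_s^{(0)})\in P_+$, then both $t\mapsto T_a(t)$ and $t\mapsto T_s(t)$ are nondecreasing; if $(T_a^{(0)},T_s^{(0)})\in P_-$, then both are nonincreasing. *)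

theory Defs
  imports "HOL-Analysis.Analysis"
begin

definition f1 :: "real \<Rightarrow> real \<Rightarrow> real \<Rightarrow> real \<Rightarrow> real \<Rightarrow> (real \<Rightarrow> real) \<Rightarrow> real \<Rightarrow> real \<Rightarrow> real" where
  "f1 \<gamma>a lam q \<sigma>B \<epsilon>a \<beta>a Ta Ts =
     (1 / \<gamma>a) * (- lam * (Ta - Ts) + \<epsilon>a * \<sigma>B * \<bar>Ts\<bar>^3 * Ts
        - 2 * \<epsilon>a * \<sigma>B * \<bar>Ta\<bar>^3 * Ta + q * \<beta>a Ta)"

definition f2 :: "real \<Rightarrow> real \<Rightarrow> real \<Rightarrow> real \<Rightarrow> real \<Rightarrow> (real \<Rightarrow> real) \<Rightarrow> real \<Rightarrow> real \<Rightarrow> real" where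
  "f2 \<gamma>s lam q \<sigma>B \<epsilon>a \<beta>s Ta Ts =
     (1 / \<gamma>s) * (- lam * (Ts - Ta) - \<sigma>B * \<bar>Ts\<bar>^3 * Ts
        + \<epsilon>a * \<sigma>B * \<bar>Ta\<bar>^3 * Ta + q * \<beta>s Ts)"

end

theory Submission
  imports Defs
begin

lemma dpos: "((\<lambda>x::real. (max x 0)^2) has_real_derivative 2 * max x 0) (at x)"
proof (cases "x = 0")
  case True
  have eq: "((max (0 + h) 0)^2 - (max 0 0)^2) / h = max h 0" for h :: real
    by (cases "h \<le> 0") (auto simp: max_def power2_eq_square)
  have "((\<lambda>h::real. max h 0) \<longlongrightarrow> max 0 0) (at 0)"
    by (intro tendsto_max tendsto_ident_at tendsto_const)
  then have "((\<lambda>h::real. ((max (0 + h) 0)^2 - (max 0 0)^2) / h) \<longlongrightarrow> 0) (at 0)"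
    unfolding eq by simp
  then show ?thesis using True by (simp add: DERIV_def)
next
  case False
  show ?thesis
  proof (cases "x > 0")
    case True
    have d: "((\<lambda>x::real. x^2) has_real_derivative 2 * x) (at x)"
      by (auto intro!: derivative_eq_intros)
    have "((\<lambda>x::real. (max x 0)^2) has_real_derivative 2 * x) (at x)"
      by (rule has_field_derivative_transform_within_open[OF d, of "{0<..}"]) (use True in auto)
    then show ?thesis using True by simp
  next
    case F2: False
    have d: "((\<lambda>x::real. 0) has_real_derivative 0) (at x)"
      by (auto intro!: derivative_eq_intros)
    have "((\<lambda>x::real. (max x 0)^2) has_real_derivative 0) (at x)"
      by (rule has_field_derivative_transform_within_open[OF d, of "{..<0}"]) (use F2 False in auto)
    then show ?thesis using F2 False by simp
  qed
qed

lemma p4_mono: "(x::real) \<le> y \<Longrightarrow> \<bar>x\<bar>^3 * x \<le> \<bar>y\<bar>^3 * y"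
proof -
  assume "x \<le> y"
  show ?thesis
  proof (cases "x \<ge> 0")
    case True then show ?thesis using \<open>x \<le> y\<close>
      by (simp add: mult_mono power_mono)
  next
    case False
    show ?thesis
    proof (cases "y \<ge> 0")
      case True then show ?thesis using False
        proof -
        have "\<bar>x\<bar>^3 * x \<le> 0" by (rule mult_nonneg_nonpos) (use False in auto)
        moreover have "0 \<le> \<bar>y\<bar>^3 * y" using True by simp
        ultimately show ?thesis by linarith
      qed
    next
      case F2: False
      have "\<bar>y\<bar> \<le> \<bar>x\<bar>" using \<open>x \<le> y\<close> F2 by simp
      hence "\<bar>y\<bar>^4 \<le> \<bar>x\<bar>^4" by (rule power_mono) simp
      moreover have "\<bar>x\<bar>^3 * x = - (\<bar>x\<bar>^4)" "\<bar>y\<bar>^3 * y = - (\<bar>y\<bar>^4)" using False F2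
        by (simp_all add: power_def abs_if) 
      ultimately show ?thesis by simp
    qed
  qed
qed

lemma q1: assumes "0 \<le> a" "a \<le> M" "0 \<le> b" "b \<le> M"
  shows "\<bar>a^4 - b^4\<bar> \<le> 4 * M^3 * \<bar>a - (b::real)\<bar>"
proof -
  have e: "a^4 - b^4 = (a - b) * (a^3 + a^2*b + a*b^2 + b^3)" by algebra
  have "a^3 \<le> M^3" "b^3 \<le> M^3" using assms by (simp_all add: power_mono)
  moreover have "a^2*b \<le> M^3" "a*b^2 \<le> M^3"
  proof -
    have "a^2 \<le> M^2" "b^2 \<le> M^2" using assms by (simp_all add: power_mono)
    hence "a^2*b \<le> M^2*M" "a*b^2 \<le> M*M^2" using assms by (simp_all add: mult_mono)
    thus "a^2*b \<le> M^3" "a*b^2 \<le> M^3" by (simp_all add: power3_eq_cube power2_eq_square algebra_simps)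
  qed
  moreover have "0 \<le> a^3 + a^2*b + a*b^2 + b^3" using assms by simp
  ultimately have "\<bar>a^3 + a^2*b + a*b^2 + b^3\<bar> \<le> 4 * M^3" by linarith
  then show ?thesis unfolding e abs_mult
    by (metis abs_ge_zero mult.commute mult_right_mono)
qed

lemma q2: assumes "0 \<le> a" "a \<le> M" "0 \<le> b" "b \<le> M"
  shows "a^4 + b^4 \<le> M^3 * (a + (b::real))"
proof -
  have "a^3 \<le> M^3" "b^3 \<le> M^3" using assms by (simp_all add: power_mono)
  hence "a^3 * a \<le> M^3 * a" "b^3 * b \<le> M^3 * b" using assms by (simp_all add: mult_right_mono)
  then show ?thesis by (simp add: algebra_simps power4_eq_xxxx power3_eq_cube)
qed

lemma p4_lip: assumes "\<bar>x\<bar> \<le> M" "\<bar>y\<bar> \<le> M" shows "\<bar>\<bar>x\<bar>^3 * x - \<bar>y\<bar>^3 * (y::real)\<bar> \<le> 4 * M^3 * \<bar>x - y\<bar>"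
proof -
  have M: "M \<ge> 0" using assms by linarith
  have M3: "0 \<le> M^3" using M by simp
  consider "x \<ge> 0" "y \<ge> 0" | "x \<ge> 0" "y < 0" | "x < 0" "y \<ge> 0" | "x < 0" "y < 0" by linarith
  then show ?thesis
  proof cases
    case 1
    then show ?thesis using q1[of x M y] assms by (simp add: power4_eq_xxxx power3_eq_cube)
  next
    case 4
    then show ?thesis using q1[of "-x" M "-y"] assms by (simp add: power4_eq_xxxx power3_eq_cube abs_minus_commute)
  next
    case 2
    have e1: "\<bar>x\<bar>^3 * x - \<bar>y\<bar>^3 * y = 1 * (x^4 + (-y)^4)" using 2 by (simp add: power4_eq_xxxx power3_eq_cube)
    have "0 \<le> x^4 + (-y)^4" by simp
    hence "\<bar>\<bar>x\<bar>^3 * x - \<bar>y\<bar>^3 * y\<bar> = x^4 + (-y)^4" unfolding e1 by (simp add: abs_mult)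
    also have "\<dots> \<le> M^3 * (x + (-y))" using q2[of x M "-y"] 2 assms by simp
    also have "\<dots> \<le> 4 * M^3 * \<bar>x - y\<bar>" using 2 M3 by simp
    finally show ?thesis .
  next
    case 3
    have e1: "\<bar>x\<bar>^3 * x - \<bar>y\<bar>^3 * y = (-1) * ((-x)^4 + y^4)" using 3 by (simp add: power4_eq_xxxx power3_eq_cube)
    have nn: "0 \<le> (-x)^4 + y^4" by simp
    hence "\<bar>\<bar>x\<bar>^3 * x - \<bar>y\<bar>^3 * y\<bar> = (-x)^4 + y^4" unfolding e1 abs_mult by simp
    also have "\<dots> \<le> M^3 * ((-x) + y)" using q2[of "-x" M y] 3 assms by simp
    also have "\<dots> \<le> 4 * M^3 * \<bar>x - y\<bar>" using 3 M3 by simp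
    finally show ?thesis .
  qed
qed


lemma key:
  fixes F :: "real \<Rightarrow> real \<Rightarrow> real"
  assumes monoF: "\<And>a b d. b \<le> d \<Longrightarrow> F a b \<le> F a d"
    and lip1: "\<bar>F y1 y2 - F z1 y2\<bar> \<le> L * \<bar>y1 - z1\<bar>"
    and lip2: "\<bar>F z1 (max y2 z2) - F z1 z2\<bar> \<le> L * \<bar>max y2 z2 - z2\<bar>"
  shows "max (y1 - z1) 0 * (F y1 y2 - F z1 z2) \<le> max (y1 - z1) 0 * (L * max (y1 - z1) 0 + L * max (y2 - z2) 0)"
proof (cases "y1 - z1 > 0")
  case True
  have "F z1 y2 \<le> F z1 (max y2 z2)" by (rule monoF) simp
  moreover have "max y2 z2 - z2 = max (y2 - z2) 0" by (simp add: max_def)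
  ultimately have "F y1 y2 - F z1 z2 \<le> L * max (y1 - z1) 0 + L * max (y2 - z2) 0"
    using lip1 lip2 True by (simp add: abs_le_iff max_def split: if_splits)
  then show ?thesis using True by (simp add: mult_left_mono)
next
  case False
  then show ?thesis by simp
qed

lemma comparison:
  fixes F G :: "real \<Rightarrow> real \<Rightarrow> real" and Ya Yb Za Zb Ya' Yb' Za' Zb' :: "real \<Rightarrow> real" and T :: real
  assumes lip: "\<And>M. M \<ge> 0 \<Longrightarrow> \<exists>L\<ge>0. \<forall>a b c d. \<bar>a\<bar> \<le> M \<longrightarrow> \<bar>b\<bar> \<le> M \<longrightarrow> \<bar>c\<bar> \<le> M \<longrightarrow> \<bar>d\<bar> \<le> M \<longrightarrow>
        \<bar>F a b - F c b\<bar> \<le> L * \<bar>a - c\<bar> \<and> \<bar>F a b - F a d\<bar> \<le> L * \<bar>b - d\<bar> \<and>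
        \<bar>G a b - G c b\<bar> \<le> L * \<bar>a - c\<bar> \<and> \<bar>G a b - G a d\<bar> \<le> L * \<bar>b - d\<bar>"
    and monoF: "\<And>a b d. b \<le> d \<Longrightarrow> F a b \<le> F a d"
    and monoG: "\<And>a c b. a \<le> c \<Longrightarrow> G a b \<le> G c b"
    and dY1: "\<And>t. t \<ge> 0 \<Longrightarrow> (Ya has_real_derivative Ya' t) (at t within {0..})"
    and dY2: "\<And>t. t \<ge> 0 \<Longrightarrow> (Yb has_real_derivative Yb' t) (at t within {0..})"
    and dZ1: "\<And>t. t \<ge> 0 \<Longrightarrow> (Za has_real_derivative Za' t) (at t within {0..})"
    and dZ2: "\<And>t. t \<ge> 0 \<Longrightarrow> (Zb has_real_derivative Zb' t) (at t within {0..})"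
    and sY1: "\<And>t. t \<ge> 0 \<Longrightarrow> Ya' t \<le> F (Ya t) (Yb t)"
    and sY2: "\<And>t. t \<ge> 0 \<Longrightarrow> Yb' t \<le> G (Ya t) (Yb t)"
    and sZ1: "\<And>t. t \<ge> 0 \<Longrightarrow> F (Za t) (Zb t) \<le> Za' t"
    and sZ2: "\<And>t. t \<ge> 0 \<Longrightarrow> G (Za t) (Zb t) \<le> Zb' t"
    and i1: "Ya 0 \<le> Za 0" and i2: "Yb 0 \<le> Zb 0"
    and T: "T \<ge> 0"
  shows "Ya T \<le> Za T \<and> Yb T \<le> Zb T"
proof -
  have cont: "continuous_on {0..T} X"
    if X: "\<And>t. t \<ge> 0 \<Longrightarrow> (X has_real_derivative X' t) (at t within {0..})" for X X'
    unfolding continuous_on_eq_continuous_within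
  proof
    fix t assume t: "t \<in> {0..T}"
    have "continuous (at t within {0..}) X" using X[of t] t by (intro DERIV_continuous) auto
    then show "continuous (at t within {0..T}) X" by (rule continuous_within_subset) auto
  qed
  have bnd: "\<exists>B. \<forall>t\<in>{0..T}. \<bar>X t\<bar> \<le> B" if "continuous_on {0..T} X" for X :: "real \<Rightarrow> real"
  proof -
    have "bounded (X ` {0..T})" by (intro compact_imp_bounded compact_continuous_image that compact_Icc)
    then show ?thesis by (auto simp: bounded_real)
  qed
  obtain B1 where B1: "\<forall>t\<in>{0..T}. \<bar>Ya t\<bar> \<le> B1" using bnd[OF cont[OF dY1]] by blast
  obtain B2 where B2: "\<forall>t\<in>{0..T}. \<bar>Yb t\<bar> \<le> B2" using bnd[OF cont[OF dY2]] by blast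
  obtain B3 where B3: "\<forall>t\<in>{0..T}. \<bar>Za t\<bar> \<le> B3" using bnd[OF cont[OF dZ1]] by blast
  obtain B4 where B4: "\<forall>t\<in>{0..T}. \<bar>Zb t\<bar> \<le> B4" using bnd[OF cont[OF dZ2]] by blast
  define M where "M = \<bar>B1\<bar> + \<bar>B2\<bar> + \<bar>B3\<bar> + \<bar>B4\<bar>"
  have M: "M \<ge> 0" unfolding M_def by simp
  have bounds: "\<bar>Ya t\<bar> \<le> M \<and> \<bar>Yb t\<bar> \<le> M \<and> \<bar>Za t\<bar> \<le> M \<and> \<bar>Zb t\<bar> \<le> M" if "t \<in> {0..T}" for t
  proof -
    have "\<bar>Ya t\<bar> \<le> B1" "\<bar>Yb t\<bar> \<le> B2" "\<bar>Za t\<bar> \<le> B3" "\<bar>Zb t\<bar> \<le> B4" using B1 B2 B3 B4 that by auto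
    moreover have "B1 \<le> \<bar>B1\<bar>" "B2 \<le> \<bar>B2\<bar>" "B3 \<le> \<bar>B3\<bar>" "B4 \<le> \<bar>B4\<bar>" "0 \<le> \<bar>B1\<bar>" "0 \<le> \<bar>B2\<bar>" "0 \<le> \<bar>B3\<bar>" "0 \<le> \<bar>B4\<bar>" by auto
    ultimately show ?thesis unfolding M_def by linarith
  qed
  obtain L where L0: "L \<ge> 0" and L: "\<forall>a b c d. \<bar>a\<bar> \<le> M \<longrightarrow> \<bar>b\<bar> \<le> M \<longrightarrow> \<bar>c\<bar> \<le> M \<longrightarrow> \<bar>d\<bar> \<le> M \<longrightarrow>
        \<bar>F a b - F c b\<bar> \<le> L * \<bar>a - c\<bar> \<and> \<bar>F a b - F a d\<bar> \<le> L * \<bar>b - d\<bar> \<and>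
        \<bar>G a b - G c b\<bar> \<le> L * \<bar>a - c\<bar> \<and> \<bar>G a b - G a d\<bar> \<le> L * \<bar>b - d\<bar>"
    using lip[OF M] by blast
  define p where "p = (\<lambda>x::real. (max x 0)^2)"
  define phi where "phi = (\<lambda>s. p (Ya s - Za s) + p (Yb s - Zb s))"
  define phi' where "phi' = (\<lambda>s. 2 * max (Ya s - Za s) 0 * (Ya' s - Za' s) + 2 * max (Yb s - Zb s) 0 * (Yb' s - Zb' s))"
  have dphi: "(phi has_real_derivative phi' s) (at s within {0..})" if "s \<ge> 0" for s
  proof -
    have a: "((\<lambda>s. p (Ya s - Za s)) has_real_derivative 2 * max (Ya s - Za s) 0 * (Ya' s - Za' s)) (at s within {0..})"
      unfolding p_def by (rule DERIV_chain2[OF dpos DERIV_diff[OF dY1[OF that] dZ1[OF that]]])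
    have b: "((\<lambda>s. p (Yb s - Zb s)) has_real_derivative 2 * max (Yb s - Zb s) 0 * (Yb' s - Zb' s)) (at s within {0..})"
      unfolding p_def by (rule DERIV_chain2[OF dpos DERIV_diff[OF dY2[OF that] dZ2[OF that]]])
    show ?thesis unfolding phi_def phi'_def using DERIV_add[OF a b] by simp
  qed
  have ineq: "phi' s \<le> 4 * L * phi s" if s: "s \<in> {0..T}" for s
  proof -
    define d where "d = max (Ya s - Za s) 0"
    define e where "e = max (Yb s - Zb s) 0"
    have bs: "\<bar>Ya s\<bar> \<le> M" "\<bar>Yb s\<bar> \<le> M" "\<bar>Za s\<bar> \<le> M" "\<bar>Zb s\<bar> \<le> M" using bounds[OF s] by auto
    have bm1: "\<bar>max (Ya s) (Za s)\<bar> \<le> M" "\<bar>max (Yb s) (Zb s)\<bar> \<le> M" using bs by (auto simp: max_def)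
    have k1: "d * (F (Ya s) (Yb s) - F (Za s) (Zb s)) \<le> d * (L * d + L * e)"
      unfolding d_def e_def
    proof (rule key[where F=F])
      show "\<And>a b d. b \<le> d \<Longrightarrow> F a b \<le> F a d" by (rule monoF)
      show "\<bar>F (Ya s) (Yb s) - F (Za s) (Yb s)\<bar> \<le> L * \<bar>Ya s - Za s\<bar>" using L[rule_format, OF bs(1) bs(2) bs(3) bs(4)] by (rule conjunct1)
      show "\<bar>F (Za s) (max (Yb s) (Zb s)) - F (Za s) (Zb s)\<bar> \<le> L * \<bar>max (Yb s) (Zb s) - Zb s\<bar>"
        using L[rule_format, OF bs(3) bm1(2) bs(3) bs(4)] by simp
    qed
    have k2: "e * (G (Ya s) (Yb s) - G (Za s) (Zb s)) \<le> e * (L * e + L * d)"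
      unfolding d_def e_def
    proof (rule key[where F="\<lambda>b a. G a b"])
      show "\<And>a b d. b \<le> d \<Longrightarrow> G b a \<le> G d a" by (rule monoG)
      show "\<bar>G (Ya s) (Yb s) - G (Ya s) (Zb s)\<bar> \<le> L * \<bar>Yb s - Zb s\<bar>" using L[rule_format, OF bs(1) bs(2) bs(1) bs(4)] by simp
      show "\<bar>G (max (Ya s) (Za s)) (Zb s) - G (Za s) (Zb s)\<bar> \<le> L * \<bar>max (Ya s) (Za s) - Za s\<bar>"
        using L[rule_format, OF bm1(1) bs(4) bs(3) bs(4)] by simp
    qed
    have s0: "s \<ge> 0" using s by simp
    have d0: "d \<ge> 0" "e \<ge> 0" unfolding d_def e_def by auto
    have h1: "d * (Ya' s - Za' s) \<le> d * (F (Ya s) (Yb s) - F (Za s) (Zb s))"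
      by (rule mult_left_mono) (use sY1[OF s0] sZ1[OF s0] d0 in auto)
    have h2: "e * (Yb' s - Zb' s) \<le> e * (G (Ya s) (Yb s) - G (Za s) (Zb s))"
      by (rule mult_left_mono) (use sY2[OF s0] sZ2[OF s0] d0 in auto)
    have h3: "L * (2 * d * e) \<le> L * (d^2 + e^2)"
    proof (rule mult_left_mono)
      have "0 \<le> (d - e)^2" by simp
      then show "2 * d * e \<le> d^2 + e^2" by (simp add: power2_eq_square algebra_simps)
    qed (use L0 in auto)
    have "phi' s = 2 * (d * (Ya' s - Za' s)) + 2 * (e * (Yb' s - Zb' s))"
      unfolding phi'_def d_def e_def by simp
    moreover have "phi s = d^2 + e^2" unfolding phi_def p_def d_def e_def by simp
    ultimately show ?thesis using h1 h2 h3 k1 k2 by (simp add: algebra_simps power2_eq_square)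
  qed
  define psi where "psi = (\<lambda>s. exp (- (4 * L) * s) * phi s)"
  have "psi T \<le> psi 0"
  proof (rule DERIV_nonpos_imp_decreasing_open[OF T])
    fix x assume x: "0 < x" "x < T"
    have "(phi has_real_derivative phi' x) (at x within {0<..})"
      by (rule DERIV_subset[OF dphi]) (use x in auto)
    then have dx: "(phi has_real_derivative phi' x) (at x)"
      using at_within_open[of x "{0<..}"] x by auto
    have de: "((\<lambda>s. exp (- (4 * L) * s)) has_real_derivative exp (- (4 * L) * x) * (- (4 * L))) (at x)"
      by (rule DERIV_chain2[OF DERIV_exp]) (auto intro!: derivative_eq_intros)
    have "(psi has_real_derivative exp (- (4 * L) * x) * (- (4 * L)) * phi x + exp (- (4 * L) * x) * phi' x) (at x)"
      using DERIV_mult[OF de dx] unfolding psi_def by (simp add: mult.commute)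
    moreover have "exp (- (4 * L) * x) * (- (4 * L)) * phi x + exp (- (4 * L) * x) * phi' x \<le> 0"
    proof -
      have "exp (- (4 * L) * x) * phi' x \<le> exp (- (4 * L) * x) * (4 * L * phi x)"
        by (rule mult_left_mono) (use ineq[of x] x in auto)
      then show ?thesis by (simp add: algebra_simps)
    qed
    ultimately show "\<exists>y. (psi has_real_derivative y) (at x) \<and> y \<le> 0" by blast
  next
    have "continuous_on {0..T} phi" by (rule cont[OF dphi])
    then show "continuous_on {0..T} psi" unfolding psi_def by (intro continuous_intros)
  qed
  moreover have "psi 0 = 0" unfolding psi_def phi_def p_def using i1 i2 by simp
  ultimately have "exp (- (4 * L) * T) * phi T \<le> 0" unfolding psi_def by simp
  then have "phi T \<le> 0" by (simp add: mult_le_0_iff)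
  moreover have "p (Ya T - Za T) \<ge> 0" "p (Yb T - Zb T) \<ge> 0" unfolding p_def by auto
  ultimately have "p (Ya T - Za T) = 0" "p (Yb T - Zb T) = 0" unfolding phi_def by linarith+
  then show ?thesis unfolding p_def by (auto simp: max_def split: if_splits)
qed

lemma shift_deriv:
  fixes f :: "real \<Rightarrow> real"
  assumes "(f has_real_derivative D) (at (t + h) within {0..})" "h \<ge> 0" "t \<ge> 0"
  shows "((\<lambda>t. f (t + h)) has_real_derivative D) (at t within {0..})"
proof -
  have im: "(\<lambda>t. t + h) ` {0..} = {h..}"
  proof
    show "(\<lambda>t. t + h) ` {0..} \<subseteq> {h..}" by auto
    show "{h..} \<subseteq> (\<lambda>t. t + h) ` {0..}"
    proof
      fix y assume "y \<in> {h..}"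
      then have "y = (y - h) + h" "y - h \<in> {0..}" by auto
      then show "y \<in> (\<lambda>t. t + h) ` {0..}" by blast
    qed
  qed
  have "(f has_real_derivative D) (at ((\<lambda>t. t + h) t) within ((\<lambda>t. t + h) ` {0..}))"
    unfolding im by (rule DERIV_subset[OF assms(1)]) (use assms in auto)
  moreover have "((\<lambda>t. t + h) has_real_derivative 1) (at t within {0..})"
    by (auto intro!: derivative_eq_intros)
  ultimately have "(f \<circ> (\<lambda>t. t + h) has_real_derivative D * 1) (at t within {0..})"
    by (rule DERIV_image_chain)
  then show ?thesis by (simp add: o_def)
qed

lemma lin3:
  fixes x y z A B C g L w :: real
  assumes "\<bar>x\<bar> \<le> A * w" "\<bar>y\<bar> \<le> B * w" "\<bar>z\<bar> \<le> C * w" "g > 0" "(1/g) * (A + B + C) \<le> L" "w \<ge> 0"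
  shows "\<bar>(1/g) * (x + y + z)\<bar> \<le> L * w"
proof -
  have "\<bar>x + y + z\<bar> \<le> (A + B + C) * w" using assms(1-3) by (simp add: algebra_simps)
  then have "(1/g) * \<bar>x + y + z\<bar> \<le> (1/g) * ((A + B + C) * w)"
    by (rule mult_left_mono) (use assms(4) in simp)
  also have "\<dots> = ((1/g) * (A + B + C)) * w" by simp
  also have "\<dots> \<le> L * w" by (rule mult_right_mono) (use assms in auto)
  finally show ?thesis using assms(4) by (simp add: abs_mult)
qed

lemma coefb:
  fixes g h S Big :: real
  assumes "g > 0" "h > 0" "0 \<le> S" "S \<le> Big"
  shows "(1/g) * S \<le> (1/g + 1/h) * Big" "(1/h) * S \<le> (1/g + 1/h) * Big"
proof -
  have "(1/g) * S \<le> (1/g) * Big" "(1/h) * S \<le> (1/h) * Big" using assms by (simp_all add: divide_right_mono)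
  moreover have "0 \<le> (1/h) * Big" "0 \<le> (1/g) * Big" using assms by auto
  ultimately show "(1/g) * S \<le> (1/g + 1/h) * Big" "(1/h) * S \<le> (1/g + 1/h) * Big"
    by (simp_all add: distrib_right divide_right_mono)
qed

lemma f1_mono:
  assumes "\<gamma>a > 0" "lam \<ge> 0" "\<sigma>B > 0" "\<epsilon>a > 0" "b \<le> d"
  shows "f1 \<gamma>a lam q \<sigma>B \<epsilon>a \<beta>a a b \<le> f1 \<gamma>a lam q \<sigma>B \<epsilon>a \<beta>a a d"
proof -
  have "\<bar>b\<bar>^3 * b \<le> \<bar>d\<bar>^3 * d" by (rule p4_mono[OF assms(5)])
  then have "\<epsilon>a * \<sigma>B * (\<bar>b\<bar>^3 * b) \<le> \<epsilon>a * \<sigma>B * (\<bar>d\<bar>^3 * d)"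
    by (rule mult_left_mono) (use assms in simp)
  moreover have "lam * b \<le> lam * d" using assms by (simp add: mult_left_mono)
  ultimately have "- lam * (a - b) + \<epsilon>a * \<sigma>B * \<bar>b\<bar>^3 * b - 2 * \<epsilon>a * \<sigma>B * \<bar>a\<bar>^3 * a + q * \<beta>a a
     \<le> - lam * (a - d) + \<epsilon>a * \<sigma>B * \<bar>d\<bar>^3 * d - 2 * \<epsilon>a * \<sigma>B * \<bar>a\<bar>^3 * a + q * \<beta>a a"
    by (simp add: algebra_simps)
  then show ?thesis unfolding f1_def by (rule mult_left_mono) (use assms in simp)
qed

lemma f2_mono:
  assumes "\<gamma>s > 0" "lam \<ge> 0" "\<sigma>B > 0" "\<epsilon>a > 0" "a \<le> c"
  shows "f2 \<gamma>s lam q \<sigma>B \<epsilon>a \<beta>s a b \<le> f2 \<gamma>s lam q \<sigma>B \<epsilon>a \<beta>s c b"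
proof -
  have "\<bar>a\<bar>^3 * a \<le> \<bar>c\<bar>^3 * c" by (rule p4_mono[OF assms(5)])
  then have "\<epsilon>a * \<sigma>B * (\<bar>a\<bar>^3 * a) \<le> \<epsilon>a * \<sigma>B * (\<bar>c\<bar>^3 * c)"
    by (rule mult_left_mono) (use assms in simp)
  moreover have "lam * a \<le> lam * c" using assms by (simp add: mult_left_mono)
  ultimately have "- lam * (b - a) - \<sigma>B * \<bar>b\<bar>^3 * b + \<epsilon>a * \<sigma>B * \<bar>a\<bar>^3 * a + q * \<beta>s b
     \<le> - lam * (b - c) - \<sigma>B * \<bar>b\<bar>^3 * b + \<epsilon>a * \<sigma>B * \<bar>c\<bar>^3 * c + q * \<beta>s b"
    by (simp add: algebra_simps)
  then show ?thesis unfolding f2_def by (rule mult_left_mono) (use assms in simp)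
qed

lemma lipFG:
  assumes g: "\<gamma>a > 0" "\<gamma>s > 0" and lam: "lam \<ge> 0" and q: "q > 0" and s: "\<sigma>B > 0" and e: "\<epsilon>a > 0"
    and La: "La-lipschitz_on UNIV \<beta>a" and Ls: "Ls-lipschitz_on UNIV \<beta>s" and M: "M \<ge> 0"
  shows "\<exists>L\<ge>0. \<forall>a b c d. \<bar>a\<bar> \<le> M \<longrightarrow> \<bar>b\<bar> \<le> M \<longrightarrow> \<bar>c\<bar> \<le> M \<longrightarrow> \<bar>d\<bar> \<le> M \<longrightarrow>
        \<bar>f1 \<gamma>a lam q \<sigma>B \<epsilon>a \<beta>a a b - f1 \<gamma>a lam q \<sigma>B \<epsilon>a \<beta>a c b\<bar> \<le> L * \<bar>a - c\<bar> \<and>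
        \<bar>f1 \<gamma>a lam q \<sigma>B \<epsilon>a \<beta>a a b - f1 \<gamma>a lam q \<sigma>B \<epsilon>a \<beta>a a d\<bar> \<le> L * \<bar>b - d\<bar> \<and>
        \<bar>f2 \<gamma>s lam q \<sigma>B \<epsilon>a \<beta>s a b - f2 \<gamma>s lam q \<sigma>B \<epsilon>a \<beta>s c b\<bar> \<le> L * \<bar>a - c\<bar> \<and>
        \<bar>f2 \<gamma>s lam q \<sigma>B \<epsilon>a \<beta>s a b - f2 \<gamma>s lam q \<sigma>B \<epsilon>a \<beta>s a d\<bar> \<le> L * \<bar>b - d\<bar>"
proof -
  have La0: "La \<ge> 0" by (rule lipschitz_on_nonneg[OF La])
  have Ls0: "Ls \<ge> 0" by (rule lipschitz_on_nonneg[OF Ls])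
  have bla: "\<bar>\<beta>a x - \<beta>a y\<bar> \<le> La * \<bar>x - y\<bar>" for x y
    using lipschitz_onD[OF La, of x y] by (simp add: dist_real_def)
  have bls: "\<bar>\<beta>s x - \<beta>s y\<bar> \<le> Ls * \<bar>x - y\<bar>" for x y
    using lipschitz_onD[OF Ls, of x y] by (simp add: dist_real_def)
  define K where "K = 4 * M^3"
  have K0: "K \<ge> 0" unfolding K_def using M by simp
  define Big where "Big = lam + 2 * \<epsilon>a * \<sigma>B * K + \<sigma>B * K + q * (La + Ls)"
  define L where "L = (1/\<gamma>a + 1/\<gamma>s) * Big"
  have es: "\<epsilon>a * \<sigma>B > 0" using e s by simp
  have L0: "L \<ge> 0" unfolding L_def Big_def using g lam q s e K0 La0 Ls0 by simp
  have P: "\<bar>\<bar>x\<bar>^3 * x - \<bar>y\<bar>^3 * y\<bar> \<le> K * \<bar>x - y\<bar>" if "\<bar>x\<bar> \<le> M" "\<bar>y\<bar> \<le> M" for x y :: real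
    unfolding K_def by (rule p4_lip[OF that])
  have lamb: "\<bar>lam * u\<bar> \<le> lam * \<bar>u\<bar>" "\<bar>- lam * u\<bar> \<le> lam * \<bar>u\<bar>" for u :: real
    using lam by (simp_all add: abs_mult)
  have Pk: "\<bar>k * (\<bar>x\<bar>^3 * x - \<bar>y\<bar>^3 * y)\<bar> \<le> (k * K) * \<bar>x - y\<bar>"
    if "\<bar>x\<bar> \<le> M" "\<bar>y\<bar> \<le> M" "k \<ge> 0" for k x y :: real
    using mult_left_mono[OF P[OF that(1,2)] that(3)] that(3) by (simp add: abs_mult mult.assoc)
  have Pk': "\<bar>- (k * (\<bar>x\<bar>^3 * x - \<bar>y\<bar>^3 * y))\<bar> \<le> (k * K) * \<bar>x - y\<bar>"
    if "\<bar>x\<bar> \<le> M" "\<bar>y\<bar> \<le> M" "k \<ge> 0" for k x y :: real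
    using Pk[OF that] by simp
  have Ba: "\<bar>q * (\<beta>a x - \<beta>a y)\<bar> \<le> (q * La) * \<bar>x - y\<bar>" for x y
    using mult_left_mono[OF bla, of q x y] q by (simp add: abs_mult mult.assoc)
  have Bs: "\<bar>q * (\<beta>s x - \<beta>s y)\<bar> \<le> (q * Ls) * \<bar>x - y\<bar>" for x y
    using mult_left_mono[OF bls, of q x y] q by (simp add: abs_mult mult.assoc)
  have z0: "\<bar>0::real\<bar> \<le> 0 * w" for w :: real by simp
  have BigS: "0 \<le> lam + 2 * \<epsilon>a * \<sigma>B * K + q * La" "lam + 2 * \<epsilon>a * \<sigma>B * K + q * La \<le> Big"
    "0 \<le> lam + \<epsilon>a * \<sigma>B * K + 0" "lam + \<epsilon>a * \<sigma>B * K + 0 \<le> Big"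
    "0 \<le> lam + \<sigma>B * K + q * Ls" "lam + \<sigma>B * K + q * Ls \<le> Big"
  proof -
    have nn: "0 \<le> \<epsilon>a * \<sigma>B * K" "0 \<le> \<sigma>B * K" "0 \<le> q * La" "0 \<le> q * Ls"
      using lam q s e K0 La0 Ls0 es by simp_all
    show "0 \<le> lam + 2 * \<epsilon>a * \<sigma>B * K + q * La" "lam + 2 * \<epsilon>a * \<sigma>B * K + q * La \<le> Big"
      "0 \<le> lam + \<epsilon>a * \<sigma>B * K + 0" "lam + \<epsilon>a * \<sigma>B * K + 0 \<le> Big"
      "0 \<le> lam + \<sigma>B * K + q * Ls" "lam + \<sigma>B * K + q * Ls \<le> Big"
      unfolding Big_def distrib_left using nn lam by linarith+
  qed
  note cb = coefb[OF g]
  show ?thesis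
  proof (rule exI[of _ L], intro conjI allI impI L0)
    fix a b c d :: real
    assume a: "\<bar>a\<bar> \<le> M" and b: "\<bar>b\<bar> \<le> M" and c: "\<bar>c\<bar> \<le> M" and d: "\<bar>d\<bar> \<le> M"
    have "f1 \<gamma>a lam q \<sigma>B \<epsilon>a \<beta>a a b - f1 \<gamma>a lam q \<sigma>B \<epsilon>a \<beta>a c b
        = (1/\<gamma>a) * (- lam * (a - c) + - ((2 * \<epsilon>a * \<sigma>B) * (\<bar>a\<bar>^3 * a - \<bar>c\<bar>^3 * c)) + q * (\<beta>a a - \<beta>a c))"
      unfolding f1_def by (simp add: algebra_simps)
    also have "\<bar>\<dots>\<bar> \<le> L * \<bar>a - c\<bar>"
      by (rule lin3[OF lamb(2) Pk'[OF a c] Ba g(1)]) (use es cb(1)[OF BigS(1,2)] in \<open>auto simp: L_def\<close>)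
    finally show "\<bar>f1 \<gamma>a lam q \<sigma>B \<epsilon>a \<beta>a a b - f1 \<gamma>a lam q \<sigma>B \<epsilon>a \<beta>a c b\<bar> \<le> L * \<bar>a - c\<bar>" .
    have "f1 \<gamma>a lam q \<sigma>B \<epsilon>a \<beta>a a b - f1 \<gamma>a lam q \<sigma>B \<epsilon>a \<beta>a a d
        = (1/\<gamma>a) * (lam * (b - d) + (\<epsilon>a * \<sigma>B) * (\<bar>b\<bar>^3 * b - \<bar>d\<bar>^3 * d) + 0)"
      unfolding f1_def by (simp add: algebra_simps)
    also have "\<bar>\<dots>\<bar> \<le> L * \<bar>b - d\<bar>"
      by (rule lin3[OF lamb(1) Pk[OF b d] z0 g(1)]) (use es cb(1)[OF BigS(3,4)] in \<open>auto simp: L_def\<close>)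
    finally show "\<bar>f1 \<gamma>a lam q \<sigma>B \<epsilon>a \<beta>a a b - f1 \<gamma>a lam q \<sigma>B \<epsilon>a \<beta>a a d\<bar> \<le> L * \<bar>b - d\<bar>" .
    have "f2 \<gamma>s lam q \<sigma>B \<epsilon>a \<beta>s a b - f2 \<gamma>s lam q \<sigma>B \<epsilon>a \<beta>s c b
        = (1/\<gamma>s) * (lam * (a - c) + (\<epsilon>a * \<sigma>B) * (\<bar>a\<bar>^3 * a - \<bar>c\<bar>^3 * c) + 0)"
      unfolding f2_def by (simp add: algebra_simps)
    also have "\<bar>\<dots>\<bar> \<le> L * \<bar>a - c\<bar>"
      by (rule lin3[OF lamb(1) Pk[OF a c] z0 g(2)]) (use es cb(2)[OF BigS(3,4)] in \<open>auto simp: L_def\<close>)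
    finally show "\<bar>f2 \<gamma>s lam q \<sigma>B \<epsilon>a \<beta>s a b - f2 \<gamma>s lam q \<sigma>B \<epsilon>a \<beta>s c b\<bar> \<le> L * \<bar>a - c\<bar>" .
    have "f2 \<gamma>s lam q \<sigma>B \<epsilon>a \<beta>s a b - f2 \<gamma>s lam q \<sigma>B \<epsilon>a \<beta>s a d
        = (1/\<gamma>s) * (- lam * (b - d) + - (\<sigma>B * (\<bar>b\<bar>^3 * b - \<bar>d\<bar>^3 * d)) + q * (\<beta>s b - \<beta>s d))"
      unfolding f2_def by (simp add: algebra_simps)
    also have "\<bar>\<dots>\<bar> \<le> L * \<bar>b - d\<bar>"
      by (rule lin3[OF lamb(2) Pk'[OF b d] Bs g(2)]) (use s cb(2)[OF BigS(5,6)] in \<open>auto simp: L_def\<close>)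
    finally show "\<bar>f2 \<gamma>s lam q \<sigma>B \<epsilon>a \<beta>s a b - f2 \<gamma>s lam q \<sigma>B \<epsilon>a \<beta>s a d\<bar> \<le> L * \<bar>b - d\<bar>" .
  qed
qed
theorem lemma4p5:
  fixes \<gamma>a \<gamma>s lam q \<sigma>B \<epsilon>a Ta0 Ts0 :: real
    and \<beta>a \<beta>s Ta Ts :: "real \<Rightarrow> real"
  assumes "\<gamma>a > 0" "\<gamma>s > 0" "lam \<ge> 0" "q > 0" "\<sigma>B > 0" "0 < \<epsilon>a" "\<epsilon>a < 2"
    and "\<exists>L. L-lipschitz_on UNIV \<beta>a" "\<exists>L. L-lipschitz_on UNIV \<beta>s"
    and "\<And>x. \<beta>a x \<ge> 0" "\<And>x. \<beta>s x > 0"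
    and "\<And>t. t \<ge> 0 \<Longrightarrow>
           (Ta has_real_derivative f1 \<gamma>a lam q \<sigma>B \<epsilon>a \<beta>a (Ta t) (Ts t)) (at t within {0..})"
    and "\<And>t. t \<ge> 0 \<Longrightarrow>
           (Ts has_real_derivative f2 \<gamma>s lam q \<sigma>B \<epsilon>a \<beta>s (Ta t) (Ts t)) (at t within {0..})"
    and "Ta 0 = Ta0" "Ts 0 = Ts0"
  shows "((Ta0, Ts0) \<in> {(x, y). x \<ge> 0 \<and> y \<ge> 0 \<and>
              f1 \<gamma>a lam q \<sigma>B \<epsilon>a \<beta>a x y \<ge> 0 \<and> f2 \<gamma>s lam q \<sigma>B \<epsilon>a \<beta>s x y \<ge> 0}
            \<longrightarrow> mono_on {0..} Ta \<and> mono_on {0..} Ts)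
       \<and> ((Ta0, Ts0) \<in> {(x, y). x \<ge> 0 \<and> y \<ge> 0 \<and>
              f1 \<gamma>a lam q \<sigma>B \<epsilon>a \<beta>a x y \<le> 0 \<and> f2 \<gamma>s lam q \<sigma>B \<epsilon>a \<beta>s x y \<le> 0}
            \<longrightarrow> antimono_on {0..} Ta \<and> antimono_on {0..} Ts)"
proof -
  define F where "F = f1 \<gamma>a lam q \<sigma>B \<epsilon>a \<beta>a"
  define G where "G = f2 \<gamma>s lam q \<sigma>B \<epsilon>a \<beta>s"
  obtain La where La: "La-lipschitz_on UNIV \<beta>a" using assms(8) by blast
  obtain Ls where Ls: "Ls-lipschitz_on UNIV \<beta>s" using assms(9) by blast
  have lip: "\<exists>L\<ge>0. \<forall>a b c d. \<bar>a\<bar> \<le> M \<longrightarrow> \<bar>b\<bar> \<le> M \<longrightarrow> \<bar>c\<bar> \<le> M \<longrightarrow> \<bar>d\<bar> \<le> M \<longrightarrow>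
        \<bar>F a b - F c b\<bar> \<le> L * \<bar>a - c\<bar> \<and> \<bar>F a b - F a d\<bar> \<le> L * \<bar>b - d\<bar> \<and>
        \<bar>G a b - G c b\<bar> \<le> L * \<bar>a - c\<bar> \<and> \<bar>G a b - G a d\<bar> \<le> L * \<bar>b - d\<bar>" if "M \<ge> 0" for M
    unfolding F_def G_def by (rule lipFG[OF assms(1,2,3,4,5,6) La Ls that])
  have monoF: "F a b \<le> F a d" if "b \<le> d" for a b d
    unfolding F_def by (rule f1_mono) (use assms that in auto)
  have monoG: "G a b \<le> G c b" if "a \<le> c" for a b c
    unfolding G_def by (rule f2_mono) (use assms that in auto)
  define Ta' where "Ta' = (\<lambda>t. F (Ta t) (Ts t))"
  define Ts' where "Ts' = (\<lambda>t. G (Ta t) (Ts t))"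
  have dTa: "(Ta has_real_derivative Ta' t) (at t within {0..})" if "t \<ge> 0" for t
    unfolding Ta'_def F_def by (rule assms(12)[OF that])
  have dTs: "(Ts has_real_derivative Ts' t) (at t within {0..})" if "t \<ge> 0" for t
    unfolding Ts'_def G_def by (rule assms(13)[OF that])
  have dTah: "((\<lambda>t. Ta (t + h)) has_real_derivative Ta' (t + h)) (at t within {0..})" if "t \<ge> 0" "h \<ge> 0" for t h
    by (rule shift_deriv[OF dTa]) (use that in auto)
  have dTsh: "((\<lambda>t. Ts (t + h)) has_real_derivative Ts' (t + h)) (at t within {0..})" if "t \<ge> 0" "h \<ge> 0" for t h
    by (rule shift_deriv[OF dTs]) (use that in auto)
  have dc: "((\<lambda>t. c) has_real_derivative 0) (at t within {0..})" for c t :: real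
    by (rule DERIV_const)
  show ?thesis
  proof (rule conjI; rule impI)
    assume "(Ta0, Ts0) \<in> {(x, y). x \<ge> 0 \<and> y \<ge> 0 \<and>
              f1 \<gamma>a lam q \<sigma>B \<epsilon>a \<beta>a x y \<ge> 0 \<and> f2 \<gamma>s lam q \<sigma>B \<epsilon>a \<beta>s x y \<ge> 0}"
    then have p: "0 \<le> F Ta0 Ts0" "0 \<le> G Ta0 Ts0" unfolding F_def G_def by auto
    have low: "Ta0 \<le> Ta t \<and> Ts0 \<le> Ts t" if "t \<ge> 0" for t
      by (rule comparison[where Ya="\<lambda>_. Ta0" and Yb="\<lambda>_. Ts0" and Ya'="\<lambda>_. 0" and Yb'="\<lambda>_. 0"
            and Za=Ta and Zb=Ts and Za'=Ta' and Zb'=Ts', OF lip monoF monoG])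
         (use p that dTa dTs dc assms(14,15) in \<open>auto simp: Ta'_def Ts'_def\<close>)
    have step: "Ta t \<le> Ta (t + h) \<and> Ts t \<le> Ts (t + h)" if "t \<ge> 0" "h \<ge> 0" for t h
      by (rule comparison[where Ya=Ta and Yb=Ts and Ya'=Ta' and Yb'=Ts'
            and Za="\<lambda>t. Ta (t + h)" and Zb="\<lambda>t. Ts (t + h)" and Za'="\<lambda>t. Ta' (t + h)" and Zb'="\<lambda>t. Ts' (t + h)",
            OF lip monoF monoG])
         (use that dTa dTs dTah dTsh low[of h] assms(14,15) in \<open>auto simp: Ta'_def Ts'_def\<close>)
    show "mono_on {0..} Ta \<and> mono_on {0..} Ts"
    proof (intro conjI)
      show "mono_on {0..} Ta"
      proof (rule mono_onI)
        fix r s :: real assume "r \<in> {0..}" "s \<in> {0..}" "r \<le> s"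
        then have "Ta r \<le> Ta (r + (s - r))" using step[of r "s - r"] by auto
        then show "Ta r \<le> Ta s" by simp
      qed
      show "mono_on {0..} Ts"
      proof (rule mono_onI)
        fix r s :: real assume "r \<in> {0..}" "s \<in> {0..}" "r \<le> s"
        then have "Ts r \<le> Ts (r + (s - r))" using step[of r "s - r"] by auto
        then show "Ts r \<le> Ts s" by simp
      qed
    qed
  next
    assume "(Ta0, Ts0) \<in> {(x, y). x \<ge> 0 \<and> y \<ge> 0 \<and>
              f1 \<gamma>a lam q \<sigma>B \<epsilon>a \<beta>a x y \<le> 0 \<and> f2 \<gamma>s lam q \<sigma>B \<epsilon>a \<beta>s x y \<le> 0}"
    then have p: "F Ta0 Ts0 \<le> 0" "G Ta0 Ts0 \<le> 0" unfolding F_def G_def by auto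
    have up: "Ta t \<le> Ta0 \<and> Ts t \<le> Ts0" if "t \<ge> 0" for t
      by (rule comparison[where Za="\<lambda>_. Ta0" and Zb="\<lambda>_. Ts0" and Za'="\<lambda>_. 0" and Zb'="\<lambda>_. 0"
            and Ya=Ta and Yb=Ts and Ya'=Ta' and Yb'=Ts', OF lip monoF monoG])
         (use p that dTa dTs dc assms(14,15) in \<open>auto simp: Ta'_def Ts'_def\<close>)
    have step: "Ta (t + h) \<le> Ta t \<and> Ts (t + h) \<le> Ts t" if "t \<ge> 0" "h \<ge> 0" for t h
      by (rule comparison[where Za=Ta and Zb=Ts and Za'=Ta' and Zb'=Ts'
            and Ya="\<lambda>t. Ta (t + h)" and Yb="\<lambda>t. Ts (t + h)" and Ya'="\<lambda>t. Ta' (t + h)" and Yb'="\<lambda>t. Ts' (t + h)",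
            OF lip monoF monoG])
         (use that dTa dTs dTah dTsh up[of h] assms(14,15) in \<open>auto simp: Ta'_def Ts'_def\<close>)
    show "antimono_on {0..} Ta \<and> antimono_on {0..} Ts"
    proof (intro conjI)
      show "antimono_on {0..} Ta"
      proof (rule monotone_onI)
        fix r s :: real assume "r \<in> {0..}" "s \<in> {0..}" "r \<le> s"
        then have "Ta (r + (s - r)) \<le> Ta r" using step[of r "s - r"] by auto
        then show "Ta s \<le> Ta r" by simp
      qed
      show "antimono_on {0..} Ts"
      proof (rule monotone_onI)
        fix r s :: real assume "r \<in> {0..}" "s \<in> {0..}" "r \<le> s"
        then have "Ts (r + (s - r)) \<le> Ts r" using step[of r "s - r"] by auto
        then show "Ts s \<le> Ts r" by simp
      qed
    qed
  qed
qed

end
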